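(* Let $\psi\in \mathcal{F}$. Then for $i=1,2,\dots,I$, $\phi_i\in\mathcal{C}^\uparrow$.
   Context: Fix $I\in\mathbb{N}$. $\mathcal{C}=\{f\in C(\mathbb{R}_+,\mathbb{R}_+):f(0)=0,f\text{ non-decreasing}\}$, $\mathcal{C}^\uparrow=\{f\in\mathcal{C}:f\text{ strictly increasing},\lim_{u\to\infty}f(u)=\infty\}$. For $\psi=(\psi_i)_{i=1}^I\in\mathcal{C}^I$, $\phi_i(u):=u-\sum_{j=1}^I2(i\wedge j)\psi_j(u)$. $\mathcal{F}:=\{\psi\in\mathcal{C}^I:\phi_I\in\mathcal{C}^\uparrow\}$. *)

theory Defs
  imports "HOL-Analysis.Analysis"
begin

text \<open>Functions R_+ -> R_+ are modelled as real => real, with all conditions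
  imposed only on the domain {0..}.\<close>

definition classC :: "(real \<Rightarrow> real) \<Rightarrow> bool" where
  "classC f \<longleftrightarrow> continuous_on {0..} f \<and> (\<forall>u\<ge>0. f u \<ge> 0) \<and> f 0 = 0
     \<and> mono_on {0..} f"

definition classC_up :: "(real \<Rightarrow> real) \<Rightarrow> bool" where
  "classC_up f \<longleftrightarrow> classC f \<and> strict_mono_on {0..} f
     \<and> filterlim f at_top at_top"

text \<open>psi is indexed by i in {1..I}.\<close>
definition phi :: "nat \<Rightarrow> (nat \<Rightarrow> real \<Rightarrow> real) \<Rightarrow> nat \<Rightarrow> real \<Rightarrow> real" where
  "phi I psi i u = u - (\<Sum>j=1..I. 2 * real (min i j) * psi j u)"

definition classF :: "nat \<Rightarrow> (nat \<Rightarrow> real \<Rightarrow> real) \<Rightarrow> bool" where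
  "classF I psi \<longleftrightarrow> (\<forall>i\<in>{1..I}. classC (psi i)) \<and> classC_up (phi I psi I)"

end

theory Submission
  imports Defs
begin

theorem lemma3p1:
  fixes I :: nat and psi :: "nat \<Rightarrow> real \<Rightarrow> real"
  assumes "I \<ge> 1"
    and "classF I psi"
  shows "\<forall>i\<in>{1..I}. classC_up (phi I psi i)"
proof
  fix i assume i: "i \<in> {1..I}"
  have C: "\<And>j. j \<in> {1..I} \<Longrightarrow> classC (psi j)" using assms(2) unfolding classF_def by blast
  have CU: "classC_up (phi I psi I)" using assms(2) unfolding classF_def by blast
  define D where "D u = (\<Sum>j=1..I. 2 * (real j - real (min i j)) * psi j u)" for u
  have eq: "phi I psi i u = phi I psi I u + D u" for u
  proof -
    have "(\<Sum>j=1..I. 2 * real (min I j) * psi j u) = (\<Sum>j=1..I. 2 * real (min i j) * psi j u) + D u"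
      unfolding D_def sum.distrib[symmetric]
      by (rule sum.cong) (auto simp: algebra_simps)
    then show ?thesis unfolding phi_def by simp
  qed
  have coef: "\<And>j. 0 \<le> 2 * (real j - real (min i j))" by simp
  have Dcont: "continuous_on {0..} D"
    unfolding D_def[abs_def]
    by (intro continuous_on_sum continuous_on_mult_left) (use C in \<open>auto simp: classC_def\<close>)
  have D0: "D 0 = 0" unfolding D_def using C by (auto simp: classC_def intro!: sum.neutral)
  have Dmono: "D u \<le> D v" if "0 \<le> u" "u \<le> v" for u v
    unfolding D_def
  proof (rule sum_mono)
    fix j assume j: "j \<in> {1..I}"
    have "psi j u \<le> psi j v" using C[OF j] that unfolding classC_def mono_on_def by auto
    then show "2 * (real j - real (min i j)) * psi j u \<le> 2 * (real j - real (min i j)) * psi j v"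
      by (intro mult_left_mono) auto
  qed
  have Dnn: "0 \<le> D u" if "0 \<le> u" for u using Dmono[of 0 u] D0 that by simp
  have sm: "strict_mono_on {0..} (phi I psi i)"
  proof (rule strict_mono_onI)
    fix r s :: real assume "r \<in> {0..}" "s \<in> {0..}" "r < s"
    then have "phi I psi I r < phi I psi I s" using CU unfolding classC_up_def strict_mono_on_def by auto
    moreover have "D r \<le> D s" using Dmono \<open>r \<in> {0..}\<close> \<open>r < s\<close> by auto
    ultimately show "phi I psi i r < phi I psi i s" unfolding eq by simp
  qed
  have "classC (phi I psi i)"
    unfolding classC_def
  proof (intro conjI allI impI)
    show "continuous_on {0..} (phi I psi i)" unfolding eq[abs_def]
      using CU Dcont by (intro continuous_on_add) (auto simp: classC_up_def classC_def)
    show "0 \<le> phi I psi i u" if "0 \<le> u" for u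
      using CU Dnn[OF that] that unfolding eq by (auto simp: classC_up_def classC_def)
    show "phi I psi i 0 = 0" using CU D0 unfolding eq by (auto simp: classC_up_def classC_def)
    show "mono_on {0..} (phi I psi i)" using sm by (rule strict_mono_on_imp_mono_on)
  qed
  moreover have "filterlim (phi I psi i) at_top at_top"
  proof (rule filterlim_at_top_mono)
    show "filterlim (phi I psi I) at_top at_top" using CU by (simp add: classC_up_def)
    show "\<forall>\<^sub>F x in at_top. phi I psi I x \<le> phi I psi i x"
      using eventually_ge_at_top[of "0::real"] by eventually_elim (simp add: eq Dnn)
  qed
  ultimately show "classC_up (phi I psi i)" using sm by (simp add: classC_up_def)
qed

end
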